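(* Let $k\ge2$ and let $G=(\{a,b\},\varphi,a)$ be a circular D0L-system with $\varphi$ $k$-uniform. Then the graph of overhangs $GO_G$ does not contain two distinct vertices $s_1,s_2$, each carrying a loop, together with an edge from $s_1$ to $s_2$.
   Context: A D0L-system $G=(\mathcal{A},\varphi,w)$ has $L(G)=\{\varphi^n(w)\}$ and $S(L(G))$ the set of factors of its words. An interpretation of $u\in S(L(G))$ is $(p,v,s)$ with $v\in S(L(G))$, $\varphi(v)=pus$. With $v=v_1\cdots v_n$, $v'=v'_1\cdots v'_m$, $u=u_1\cdots u_\ell$, interpretations $(p,v,s),(p',v',s')$ are synchronized at position $j$ if $\varphi(v_1\cdots v_i)=pu_1\cdots u_j$ and $\varphi(v'_1\cdots v'_{i'})=p'u_1\cdots u_j$ for some $i,i'$; $u$ has a synchronizing point at $j$ if all its interpretations are pairwise synchronized at $j$. A PD0L-system injective on $S(L(G))$ is circular if there is $Z$ such that every $u\in S(L(G))$ with $|u|>Z$ has a synchronizing point. $\varphi$ is $k$-uniform if $|\varphi(a)|=|\varphi(b)|=k$. Let $X=\{\varphi(a),\varphi(b)\}$. An overhang is a triple $(u_1\cdots u_m,v_1\cdots v_n,|x|)$ with $u_i,v_j\in X$, $x$ nonempty, such that: (i) $x$ is a suffix of $u_1\cdots u_m$ but not of $u_2\cdots u_m$; (ii) $x$ is a prefix of $v_1\cdots v_n$ but not of $v_1\cdots v_{n-1}$; (iii) $x\ne u_1\cdots u_m$ or $x\ne v_1\cdots v_n$; (iv) $|v_1\cdots v_{n-1}|<|x(u_2\cdots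 u_m)^{-1}|$. Its left overhang is $u_1\cdots u_mx^{-1}$, right overhang $x^{-1}v_1\cdots v_n$. $GO_G$ has an edge from $s_1$ to $s_2$ labelled by each overhang with left overhang $s_1$ and right overhang $s_2$. *)

theory Defs
  imports Main "HOL-Library.Sublist"
begin

datatype letter = A | B

definition morph :: "(letter \<Rightarrow> letter list) \<Rightarrow> letter list \<Rightarrow> letter list" where
  "morph \<phi> w = concat (map \<phi> w)"

definition lang :: "(letter \<Rightarrow> letter list) \<Rightarrow> letter list \<Rightarrow> letter list set" where
  "lang \<phi> w = range (\<lambda>n. (morph \<phi> ^^ n) w)"

definition factors :: "letter list set \<Rightarrow> letter list set" where
  "factors L = {u. \<exists>p s. p @ u @ s \<in> L}"

definition interp :: "(letter \<Rightarrow> letter list) \<Rightarrow> letter list \<Rightarrow> letter list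
      \<Rightarrow> letter list \<times> letter list \<times> letter list \<Rightarrow> bool" where
  "interp \<phi> w u I = (case I of (p, v, s) \<Rightarrow>
       v \<in> factors (lang \<phi> w) \<and> morph \<phi> v = p @ u @ s)"

definition sync_at :: "(letter \<Rightarrow> letter list) \<Rightarrow> letter list \<Rightarrow> nat
      \<Rightarrow> letter list \<times> letter list \<times> letter list
      \<Rightarrow> letter list \<times> letter list \<times> letter list \<Rightarrow> bool" where
  "sync_at \<phi> u j I I' = (case I of (p, v, s) \<Rightarrow> case I' of (p', v', s') \<Rightarrow>
       (\<exists>i i'. i \<le> length v \<and> i' \<le> length v' \<and>
          morph \<phi> (take i v) = p @ take j u \<and>
          morph \<phi> (take i' v') = p' @ take j u))"

definition sync_point :: "(letter \<Rightarrow> letter list) \<Rightarrow> letter list \<Rightarrow> letter list \<Rightarrow> nat \<Rightarrow> bool" where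
  "sync_point \<phi> w u j = (j \<le> length u \<and>
       (\<forall>I I'. interp \<phi> w u I \<and> interp \<phi> w u I' \<longrightarrow> sync_at \<phi> u j I I'))"

definition circular :: "(letter \<Rightarrow> letter list) \<Rightarrow> letter list \<Rightarrow> bool" where
  "circular \<phi> w = ((\<forall>c. \<phi> c \<noteq> []) \<and>
       inj_on (morph \<phi>) (factors (lang \<phi> w)) \<and>
       (\<exists>Z::nat. \<forall>u \<in> factors (lang \<phi> w). length u > Z \<longrightarrow> (\<exists>j. sync_point \<phi> w u j)))"

definition uniform :: "(letter \<Rightarrow> letter list) \<Rightarrow> nat \<Rightarrow> bool" where
  "uniform \<phi> k = (length (\<phi> A) = k \<and> length (\<phi> B) = k)"

definition overhang :: "(letter \<Rightarrow> letter list) \<Rightarrow> letter list list \<Rightarrow> letter list list \<Rightarrow> nat \<Rightarrow> bool" where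
  "overhang \<phi> us vs l = (us \<noteq> [] \<and> vs \<noteq> [] \<and>
     set us \<subseteq> {\<phi> A, \<phi> B} \<and> set vs \<subseteq> {\<phi> A, \<phi> B} \<and>
     (\<exists>x. x \<noteq> [] \<and> length x = l \<and>
        suffix x (concat us) \<and> \<not> suffix x (concat (tl us)) \<and>
        prefix x (concat vs) \<and> \<not> prefix x (concat (butlast vs)) \<and>
        (x \<noteq> concat us \<or> x \<noteq> concat vs) \<and>
        length (concat (butlast vs)) < length x - length (concat (tl us))))"

definition left_overhang :: "letter list list \<Rightarrow> nat \<Rightarrow> letter list" where
  "left_overhang us l = take (length (concat us) - l) (concat us)"

definition right_overhang :: "letter list list \<Rightarrow> nat \<Rightarrow> letter list" where
  "right_overhang vs l = drop l (concat vs)"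

definition GO_edge :: "(letter \<Rightarrow> letter list) \<Rightarrow> letter list \<Rightarrow> letter list \<Rightarrow> bool" where
  "GO_edge \<phi> s1 s2 = (\<exists>us vs l. overhang \<phi> us vs l \<and>
       left_overhang us l = s1 \<and> right_overhang vs l = s2)"

end

theory Submission
  imports Defs
begin

lemma comm_pow:
  assumes "s @ w = w @ s"
  shows "s @ concat (replicate n w) = concat (replicate n w) @ s"
proof (induction n)
  case 0 then show ?case by simp
next
  case (Suc n)
  have "s @ concat (replicate (Suc n) w) = (s @ w) @ concat (replicate n w)" by simp
  also have "\<dots> = w @ (s @ concat (replicate n w))" using assms by simp
  also have "\<dots> = concat (replicate (Suc n) w) @ s" using Suc by simp
  finally show ?case .
qed

lemma comm_eq:
  assumes "s @ w = w @ s" "t @ w = w @ t" "length s = length t" "w \<noteq> []"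
  shows "s = t"
proof -
  define n where "n = length s"
  define R where "R = concat (replicate n w)"
  have lR: "length R = n * length w" unfolding R_def by (simp add: length_concat sum_list_replicate)
  have "n \<le> length R" using lR assms(4) by (cases w) auto
  have "s = take n (s @ R)" unfolding n_def by simp
  also have "\<dots> = take n (R @ s)" using comm_pow[OF assms(1)] R_def by simp
  also have "\<dots> = take n R" using \<open>n \<le> length R\<close> by simp
  finally have 1: "s = take n R" .
  have "t = take n (t @ R)" unfolding n_def using assms(3) by simp
  also have "\<dots> = take n (R @ t)" using comm_pow[OF assms(2)] R_def by simp
  also have "\<dots> = take n R" using \<open>n \<le> length R\<close> by simp
  finally show ?thesis using 1 by simp
qed

lemma len_concat_unif:
  "set xs \<subseteq> {\<phi> A, \<phi> B} \<Longrightarrow> uniform \<phi> k \<Longrightarrow> length (concat xs) = k * length xs"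
  by (induction xs) (auto simp: uniform_def)

lemma overhang_single:
  assumes u: "uniform \<phi> k" and o: "overhang \<phi> us vs l"
  shows "\<exists>u v x. us = [u] \<and> vs = [v] \<and> u \<in> {\<phi> A, \<phi> B} \<and> v \<in> {\<phi> A, \<phi> B}
     \<and> length x = l \<and> x \<noteq> [] \<and> u = take (k - l) u @ x \<and> v = x @ drop l v
     \<and> (x \<noteq> u \<or> x \<noteq> v) \<and> length u = k \<and> length v = k
     \<and> left_overhang us l = take (k - l) u \<and> right_overhang vs l = drop l v"
proof -
  from o obtain x where ne: "us \<noteq> []" "vs \<noteq> []" and su: "set us \<subseteq> {\<phi> A, \<phi> B}"
    and sv: "set vs \<subseteq> {\<phi> A, \<phi> B}" and x: "x \<noteq> []" "length x = l"
    "suffix x (concat us)" "\<not> suffix x (concat (tl us))"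
    "prefix x (concat vs)" "\<not> prefix x (concat (butlast vs))"
    "x \<noteq> concat us \<or> x \<noteq> concat vs"
    "length (concat (butlast vs)) < length x - length (concat (tl us))"
    unfolding overhang_def by blast
  have cu: "concat us = hd us @ concat (tl us)" using ne by (cases us) auto
  have cv: "concat vs = concat (butlast vs) @ last vs" using ne
    by (metis append_butlast_last_id concat.simps(1) concat.simps(2) concat_append append_Nil2)
  have "suffix (concat (tl us)) (concat us)" using cu by (metis suffixI)
  hence g1: "length (concat (tl us)) < length x"
    using x(3,4) suffix_length_suffix by (metis not_le)
  have "prefix (concat (butlast vs)) (concat vs)" using cv by (metis prefixI)
  hence g2: "length (concat (butlast vs)) < length x"
    using x(5,6) prefix_length_prefix by (metis not_le)
  have lu: "length (concat us) = k * length us" using len_concat_unif[OF su u] .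
  have lv: "length (concat vs) = k * length vs" using len_concat_unif[OF sv u] .
  have ltu: "length (concat (tl us)) = k * (length us - 1)"
    using len_concat_unif[OF _ u, of "tl us"] su by (metis length_tl list.set_sel(2) ne(1) subset_code(1) subsetD)
  have lbv: "length (concat (butlast vs)) = k * (length vs - 1)"
    using len_concat_unif[OF _ u, of "butlast vs"] sv by (metis in_set_butlastD length_butlast subset_code(1) subsetD)
  have xu: "length x \<le> length (concat us)" using x(3) by (simp add: suffix_length_le)
  have xv: "length x \<le> length (concat vs)" using x(5) by (simp add: prefix_length_le)
  have "length us = Suc (length us - 1)" using ne by (cases us) auto
  hence lu2: "length (concat us) = k + length (concat (tl us))" using lu ltu
    by (metis mult_Suc_right)
  have "length vs = Suc (length vs - 1)" using ne by (cases vs) auto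
  hence lv2: "length (concat vs) = length (concat (butlast vs)) + k" using lv lbv
    by (metis mult_Suc_right add.commute)
  have "k * (length vs - 1) < k" using x(8) lbv xu lu2 by linarith
  hence "length vs - 1 < 1" by (cases "length vs - 1") auto
  hence v1: "length vs = 1" using ne by (cases vs) auto
  hence "butlast vs = []" by (cases vs) auto
  hence "length x \<le> k" using xv lv2 by simp
  hence "k * (length us - 1) < k" using g1 ltu by linarith
  hence "length us - 1 < 1" by (cases "length us - 1") auto
  hence u1: "length us = 1" using ne by (cases us) auto
  obtain a where a: "us = [a]" using u1 by (cases us) auto
  obtain b where b: "vs = [b]" using v1 by (cases vs) (auto simp: length_Suc_conv)
  have la: "length a = k" using lu a by simp
  have lb: "length b = k" using lv b by simp
  have 1: "a = take (k - l) a @ x" using suffix_take[OF x(3)] a la x(2) by simp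
  have 2: "b = x @ drop l b" using x(5) b x(2) by (auto simp: prefix_def)
  show ?thesis
    apply (rule exI[of _ a], rule exI[of _ b], rule exI[of _ x])
    using a b su sv x 1 2 la lb by (auto simp: left_overhang_def right_overhang_def)
qed

lemma comb:
  assumes ne: "s1 \<noteq> s2" and ls: "length s1 = length s2" and l1: "length x1 = length y"
    and l2: "length x2 = length y" and yne: "y \<noteq> []"
    and h: "s1@x1 \<in> X" "x1@s1 \<in> X" "s2@x2 \<in> X" "x2@s2 \<in> X" "s1@y \<in> X" "y@s2 \<in> X"
    and X: "X = {P, Q}"
  shows False
proof -
  have d1: "s1@x1 \<noteq> s2@x2" using ne ls by auto
  have all1: "\<And>c. c \<in> X \<Longrightarrow> c = s1@x1 \<or> c = s2@x2" using d1 h(1,3) X by blast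
  have "s1@y \<noteq> s2@x2" using ne ls by auto
  hence "s1@y = s1@x1" using all1 h(5) by blast
  hence yx: "y = x1" by simp
  have d2: "x1@s1 \<noteq> x1@s2" using ne by simp
  have all2: "\<And>c. c \<in> X \<Longrightarrow> c = x1@s1 \<or> c = x1@s2" using d2 h(2) h(6) yx X by blast
  have "x2 = x1" using all2[OF h(4)] l1 l2 by auto
  hence c1: "s1@x1 = x1@s1 \<or> s1@x1 = x1@s2" and c2: "s2@x1 = x1@s1 \<or> s2@x1 = x1@s2"
    using all2 h(1,3) by auto
  have x1ne: "x1 \<noteq> []" using yx yne by simp
  show False
  proof (cases "s1@x1 = x1@s1")
    case True
    show False
    proof (cases "s2@x1 = x1@s2")
      case True
      show False using comm_eq[OF \<open>s1@x1 = x1@s1\<close> True ls x1ne] ne by simp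
    next
      case False
      hence "s2@x1 = x1@s1" using c2 by simp
      thus False using True ne by (metis append_same_eq)
    qed
  next
    case False
    hence e1: "s1@x1 = x1@s2" using c1 by simp
    show False
    proof (cases "s2@x1 = x1@s2")
      case True
      thus False using e1 ne by (metis append_same_eq)
    next
      case False
      hence e2: "s2@x1 = x1@s1" using c2 by simp
      have a: "s1@(x1@x1) = (x1@x1)@s1" using e1 e2 by (metis append_assoc)
      have b: "s2@(x1@x1) = (x1@x1)@s2" using e1 e2 by (metis append_assoc)
      show False using comm_eq[OF a b ls] x1ne ne by simp
    qed
  qed
qed

theorem mainTheorem8:
  fixes \<phi> :: "letter \<Rightarrow> letter list" and k :: nat
  assumes "k \<ge> 2" and "circular \<phi> [A]" and "uniform \<phi> k"
  shows "\<not> (\<exists>s1 s2. s1 \<noteq> s2 \<and> GO_edge \<phi> s1 s1 \<and> GO_edge \<phi> s2 s2 \<and> GO_edge \<phi> s1 s2)"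
proof
  assume "\<exists>s1 s2. s1 \<noteq> s2 \<and> GO_edge \<phi> s1 s1 \<and> GO_edge \<phi> s2 s2 \<and> GO_edge \<phi> s1 s2"
  then obtain s1 s2 where ne: "s1 \<noteq> s2" and e1: "GO_edge \<phi> s1 s1" and e2: "GO_edge \<phi> s2 s2"
    and e3: "GO_edge \<phi> s1 s2" by blast
  from e1 obtain us vs l where o1: "overhang \<phi> us vs l" "left_overhang us l = s1" "right_overhang vs l = s1"
    unfolding GO_edge_def by blast
  from overhang_single[OF assms(3) o1(1)] obtain u1 v1 x1 where
    q1: "u1 \<in> {\<phi> A, \<phi> B}" "v1 \<in> {\<phi> A, \<phi> B}" "length x1 = l" "x1 \<noteq> []" "u1 = take (k - l) u1 @ x1"
      "v1 = x1 @ drop l v1" "length u1 = k" "length v1 = k" "left_overhang us l = take (k - l) u1" "right_overhang vs l = drop l v1"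
    by (elim exE conjE) (rule that, assumption+)
  from e2 obtain us' vs' l' where o2: "overhang \<phi> us' vs' l'" "left_overhang us' l' = s2" "right_overhang vs' l' = s2"
    unfolding GO_edge_def by blast
  from overhang_single[OF assms(3) o2(1)] obtain u2 v2 x2 where
    q2: "u2 \<in> {\<phi> A, \<phi> B}" "v2 \<in> {\<phi> A, \<phi> B}" "length x2 = l'" "x2 \<noteq> []" "u2 = take (k - l') u2 @ x2"
      "v2 = x2 @ drop l' v2" "length u2 = k" "length v2 = k" "left_overhang us' l' = take (k - l') u2" "right_overhang vs' l' = drop l' v2"
    by (elim exE conjE) (rule that, assumption+)
  from e3 obtain us'' vs'' l'' where o3: "overhang \<phi> us'' vs'' l''" "left_overhang us'' l'' = s1" "right_overhang vs'' l'' = s2"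
    unfolding GO_edge_def by blast
  from overhang_single[OF assms(3) o3(1)] obtain u3 v3 y where
    q3: "u3 \<in> {\<phi> A, \<phi> B}" "v3 \<in> {\<phi> A, \<phi> B}" "length y = l''" "y \<noteq> []" "u3 = take (k - l'') u3 @ y"
      "v3 = y @ drop l'' v3" "length u3 = k" "length v3 = k" "left_overhang us'' l'' = take (k - l'') u3" "right_overhang vs'' l'' = drop l'' v3"
    by (elim exE conjE) (rule that, assumption+)
  have t1: "s1 = take (k - l) u1" "s1 = drop l v1" using o1 q1 by simp_all
  have t2: "s2 = take (k - l') u2" "s2 = drop l' v2" using o2 q2 by simp_all
  have t3: "s1 = take (k - l'') u3" "s2 = drop l'' v3" using o3 q3 by simp_all
  have L: "l \<le> k" "l' \<le> k" "l'' \<le> k"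
    using q1(3,5,7) q2(3,5,7) q3(3,5,7) by (metis length_append le_add2)+
  have ls1: "length s1 = k - l''" using t3 q3(7) L by simp
  have ls2: "length s2 = k - l''" using t3 q3(8) L by simp
  have ls1': "length s1 = k - l" using t1 q1(7) L by simp
  have ls2': "length s2 = k - l'" using t2 q2(7) L by simp
  have h1: "s1 @ x1 \<in> {\<phi> A, \<phi> B}" using q1(1,5) t1 by simp
  have h2: "x1 @ s1 \<in> {\<phi> A, \<phi> B}" using q1(2,6) t1 by simp
  have h3: "s2 @ x2 \<in> {\<phi> A, \<phi> B}" using q2(1,5) t2 by simp
  have h4: "x2 @ s2 \<in> {\<phi> A, \<phi> B}" using q2(2,6) t2 by simp
  have h5: "s1 @ y \<in> {\<phi> A, \<phi> B}" using q3(1,5) t3 by simp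
  have h6: "y @ s2 \<in> {\<phi> A, \<phi> B}" using q3(2,6) t3 by simp
  have "length x1 = length y" "length x2 = length y" using ls1 ls2 ls1' ls2' L q1(3) q2(3) q3(3) by simp_all
  then show False using comb[OF ne _ _ _ q3(4) h1 h2 h3 h4 h5 h6, of "\<phi> A" "\<phi> B"] ls1 ls2 by simp
qed

end
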